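(* With $N$, $v$, $e_\ell$ and $e$ as in the context, for every line $\ell$ of $\mathrm{PG}_2(q)$ we have $Ne_\ell=q^2v\,e$.
   Context: $q$ is a prime power, $G=\mathrm{PGL}_3(q)$ acts on the point set $\mathcal{P}$ of $\mathrm{PG}_2(q)$ (the $1$-dimensional subspaces of $\mathrm{GF}(q)^3$); lines are $2$-dimensional subspaces, viewed as sets of points. $V$ is the complex vector space with basis $\{e_{\alpha\beta}:(\alpha,\beta)\in\mathcal{P}^2\}$, and $N$ is the linear operator on $V$ with matrix entries $N_{(\alpha,\beta),(\gamma,\delta)}=|\{g\in G:\alpha^g=\beta,\ \gamma^g=\delta,\ g\text{ fixes no point of }\mathcal{P}\}|$. $v=(q-1)q(q^2-1)/3$. $e_\ell=\sum_{\beta,\beta'\in\ell}e_{\beta\beta'}$ and $e=\sum_{\beta,\beta'\in\mathcal{P},\ \beta\neq\beta'}e_{\beta\beta'}$. *)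

theory Defs
  imports "HOL-Analysis.Analysis"
begin

text \<open>Projective plane PG(2,q) over a finite field 'a (q = CARD('a)).
  Points: 1-dimensional subspaces of 'a^3, represented as sets of vectors.\<close>

definition pg_points :: "(('a::field) ^ 3) set set" where
  "pg_points = {vec.span {x} | x. x \<noteq> 0}"

definition pg_lines :: "(('a::field) ^ 3) set set set" where
  "pg_lines = {{p \<in> pg_points. p \<subseteq> W} | W. vec.subspace W \<and> vec.dim W = 2}"

definition pgl_class :: "'a::field ^ 3 ^ 3 \<Rightarrow> ('a ^ 3 ^ 3) set" where
  "pgl_class A = {(\<chi> i j. c * A $ i $ j) | c. c \<noteq> 0}"

definition PGL3 :: "('a::field ^ 3 ^ 3) set set" where
  "PGL3 = pgl_class ` {A. invertible A}"

text \<open>Action of a PGL element on a point (independent of the chosen representative).\<close>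
definition pgl_act :: "('a::field ^ 3 ^ 3) set \<Rightarrow> ('a ^ 3) set \<Rightarrow> ('a ^ 3) set" where
  "pgl_act g p = (\<Union>A\<in>g. (\<lambda>x. A *v x) ` p)"

definition fixed_point_free :: "('a::field ^ 3 ^ 3) set \<Rightarrow> bool" where
  "fixed_point_free g \<longleftrightarrow> (\<forall>p\<in>pg_points. pgl_act g p \<noteq> p)"

definition Nmat :: "('a::field ^ 3) set \<times> ('a ^ 3) set \<Rightarrow> ('a ^ 3) set \<times> ('a ^ 3) set \<Rightarrow> nat" where
  "Nmat ab cd = card {g \<in> PGL3. pgl_act g (fst ab) = snd ab \<and> pgl_act g (fst cd) = snd cd
                               \<and> fixed_point_free g}"

text \<open>Vectors of V are complex functions on P x P; N applied to w.\<close>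
definition Nop :: "((('a::field ^ 3) set \<times> ('a ^ 3) set) \<Rightarrow> complex)
                    \<Rightarrow> (('a ^ 3) set \<times> ('a ^ 3) set) \<Rightarrow> complex" where
  "Nop w ab = (\<Sum>cd\<in>pg_points \<times> pg_points. of_nat (Nmat ab cd) * w cd)"

definition e_line :: "('a::field ^ 3) set set \<Rightarrow> (('a ^ 3) set \<times> ('a ^ 3) set) \<Rightarrow> complex" where
  "e_line l ab = (if fst ab \<in> l \<and> snd ab \<in> l then 1 else 0)"

definition e_all :: "(('a::field ^ 3) set \<times> ('a ^ 3) set) \<Rightarrow> complex" where
  "e_all ab = (if fst ab \<in> pg_points \<and> snd ab \<in> pg_points \<and> fst ab \<noteq> snd ab then 1 else 0)"

end

theory Submission
  imports Defs "HOL-Computational_Algebra.Polynomial"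
begin

lemma mat_mulv: "(mat c :: 'a::field^'n^'n) *v z = c *s z"
proof -
  have "(\<Sum>j\<in>UNIV. (if i = j then c else 0) * z$j) = c * z$i" for i
  proof -
    have "(\<Sum>j\<in>UNIV. (if i = j then c else 0) * z$j) = (\<Sum>j\<in>UNIV. if i = j then c * z$j else 0)"
      by (rule sum.cong) auto
    then show ?thesis by simp
  qed
  then show ?thesis by (simp add: vec_eq_iff matrix_vector_mult_def mat_def)
qed

lemma sub_mulv: "((A::'a::field^'n^'n) - mat c) *v z = A *v z - c *s z"
  by (simp add: matrix_vector_mult_diff_rdistrib mat_mulv)

lemma mulv_scale: "(A::'a::field^'n^'m) *v (c *s x) = c *s (A *v x)"
  by (simp add: vec_eq_iff matrix_vector_mult_def sum_distrib_left algebra_simps)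

lemma not_surj_kernel:
  fixes B :: "'a::field^'n^'n"
  assumes "\<not> surj ((*v) B)"
  shows "\<exists>z. z \<noteq> 0 \<and> B *v z = 0"
proof -
  have "\<not> (\<exists>C. B ** C = mat 1)" using assms matrix_right_invertible_surjective by blast
  then have "\<not> (\<exists>C. C ** B = mat 1)" using matrix_left_right_inverse by blast
  then show ?thesis using matrix_left_invertible_ker by blast
qed

lemma dim3: "vec.dim (UNIV :: ('a::field^3) set) = 3"
proof -
  have "vec.dim (UNIV :: ('a::field^3) set) = CARD(3)" by (rule vec_dim_card)
  then show ?thesis by simp
qed

lemma invariant_plane_eig:
  fixes A :: "'a::field^3^3" and W :: "('a^3) set"
  assumes W: "vec.subspace W" "vec.dim W = 2" and inv: "\<And>z. z \<in> W \<Longrightarrow> A *v z \<in> W"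
  shows "\<exists>z \<mu>. z \<noteq> 0 \<and> A *v z = \<mu> *s z"
proof -
  have "W \<noteq> UNIV"
  proof
    assume "W = UNIV" with W(2) dim3[where 'a='a] show False by simp
  qed
  then obtain v where v: "v \<notin> W" by blast
  have spW: "vec.span W = W" using W vec.span_eq_iff by blast
  have "v \<notin> vec.span W" using v spW by metis
  then have "vec.dim (insert v W) = 3" using W by (simp add: vec.dim_insert)
  then have "vec.span (insert v W) = UNIV"
  proof -
    have "vec.span (insert v W) = vec.span UNIV"
      by (rule vec.dim_eq_span) (use \<open>vec.dim (insert v W) = 3\<close> dim3[where 'a='a] in auto)
    then show ?thesis by simp
  qed
  then have all: "\<And>y. \<exists>k. y - k *s v \<in> W" using spW by (auto simp: vec.span_insert)
  obtain \<mu> where mu: "A *v v - \<mu> *s v \<in> W" using all by blast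
  have img: "(A - mat \<mu>) *v z \<in> W" for z
  proof -
    obtain k where k: "z - k *s v \<in> W" using all by blast
    define w where "w = z - k *s v"
    have z: "z = w + k *s v" using w_def by simp
    have "(A - mat \<mu>) *v z = (A *v w - \<mu> *s w) + k *s (A *v v - \<mu> *s v)"
      unfolding sub_mulv z by (simp add: matrix_vector_right_distrib vec.scale_right_distrib algebra_simps
          mulv_scale vec.scale_right_diff_distrib)
    also have "\<dots> \<in> W"
    proof -
      have wW: "w \<in> W" using k unfolding w_def .
      have h1: "A *v w - \<mu> *s w \<in> W"
        by (rule vec.subspace_diff[OF W(1) inv[OF wW] vec.subspace_scale[OF W(1) wW]])
      have h2: "k *s (A *v v - \<mu> *s v) \<in> W" by (rule vec.subspace_scale[OF W(1) mu])
      show ?thesis by (rule vec.subspace_add[OF W(1) h1 h2])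
    qed
    finally show ?thesis .
  qed
  have "\<not> surj ((*v) (A - mat \<mu>))"
  proof
    assume "surj ((*v) (A - mat \<mu>))"
    then obtain z where "v = (A - mat \<mu>) *v z" by (metis surjD)
    then show False using img[of z] v by simp
  qed
  then obtain z where "z \<noteq> 0" "(A - mat \<mu>) *v z = 0" using not_surj_kernel by blast
  then show ?thesis by (auto simp: sub_mulv)
qed

lemma line_meet:
  fixes A :: "'a::field^3^3" and W :: "('a^3) set"
  assumes W: "vec.subspace W" "vec.dim W = 2" and A: "A' ** A = mat 1" "A ** A' = mat 1"
    and noeig: "\<And>z \<mu>. z \<noteq> 0 \<Longrightarrow> A *v z \<noteq> \<mu> *s z"
  shows "\<exists>z0. z0 \<noteq> 0 \<and> {z\<in>W. A *v z \<in> W} = vec.span {z0}"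
proof -
  define T where "T = {z. A *v z \<in> W}"
  have subT: "vec.subspace T"
    unfolding T_def vec.subspace_def
    using W(1) by (auto simp: matrix_vector_right_distrib mulv_scale vec.subspace_0 vec.subspace_add vec.subspace_scale)
  have "W \<subseteq> (*v) A ` T"
  proof
    fix w assume "w \<in> W"
    moreover have "A *v (A' *v w) = w" by (simp add: matrix_vector_mul_assoc A)
    ultimately show "w \<in> (*v) A ` T" unfolding T_def by (metis (mono_tags, lifting) image_eqI mem_Collect_eq)
  qed
  then have "vec.dim W \<le> vec.dim ((*v) A ` T)" by (rule vec.dim_subset)
  also have "\<dots> \<le> vec.dim T" by (rule vec.dim_image_le[OF matrix_vector_mul_linear_gen])
  finally have dT: "2 \<le> vec.dim T" using W(2) by simp
  have "vec.dim {x + y |x y. x \<in> W \<and> y \<in> T} \<le> 3"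
    using dim_subset_UNIV_cart_gen[where 'n=3] by simp
  with vec.dim_sums_Int[OF W(1) subT] dT W(2)
  have d1: "1 \<le> vec.dim (W \<inter> T)" by linarith
  have subU: "vec.subspace (W \<inter> T)" by (rule vec.subspace_inter[OF W(1) subT])
  have d2: "vec.dim (W \<inter> T) \<le> 1"
  proof (rule ccontr)
    assume "\<not> vec.dim (W \<inter> T) \<le> 1"
    then have "vec.dim W \<le> vec.dim (W \<inter> T)" using W(2) by simp
    then have "W \<inter> T = W" using vec.subspace_dim_equal[OF subU W(1)] by blast
    then have "\<And>z. z \<in> W \<Longrightarrow> A *v z \<in> W" unfolding T_def by blast
    then show False using invariant_plane_eig[OF W] noeig by blast
  qed
  obtain B where B: "B \<subseteq> W \<inter> T" "vec.independent B" "W \<inter> T \<subseteq> vec.span B" "card B = vec.dim (W \<inter> T)"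
    using vec.basis_exists by blast
  then have "card B = 1" using d1 d2 by simp
  then obtain z0 where z0: "B = {z0}" using card_1_singletonE by blast
  have "z0 \<noteq> 0" using B(2) z0 vec.dependent_zero by blast
  moreover have "vec.span {z0} \<subseteq> W \<inter> T"
    using B(1) z0 subU vec.span_mono vec.span_eq_iff by metis
  ultimately show ?thesis using B(3) z0 unfolding T_def by blast
qed

definition noeig :: "'a::field^3^3 \<Rightarrow> bool" where
  "noeig A \<longleftrightarrow> (\<forall>z \<mu>. z \<noteq> 0 \<longrightarrow> A *v z \<noteq> \<mu> *s z)"

definition mk :: "'a::field^3 \<Rightarrow> 'a^3 \<Rightarrow> 'a^3^3" where
  "mk u w = (\<chi> i j. if j = 1 then (if i = 2 then 1 else 0) else if j = 2 then u$i else w$i)"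

definition pol :: "'a::field \<times> 'a \<times> 'a \<Rightarrow> 'a \<Rightarrow> 'a" where
  "pol c t = t^3 + snd (snd c) * t^2 + fst (snd c) * t + fst c"

definition cf :: "'a::field^3 \<Rightarrow> 'a^3 \<Rightarrow> 'a \<times> 'a \<times> 'a" where
  "cf u w = (u$1 * w$3 - u$3 * w$1, u$2 * w$3 - u$3 * w$2 - u$1, - (u$2 + w$3))"

lemma mk_mulv:
  "(mk u w *v z) $ 1 = u$1 * z$2 + w$1 * z$3"
  "(mk u w *v z) $ 2 = z$1 + u$2 * z$2 + w$2 * z$3"
  "(mk u w *v z) $ 3 = u$3 * z$2 + w$3 * z$3"
  by (simp_all add: mk_def matrix_vector_mult_def sum_3 algebra_simps)

lemma vec3_eq: "(x::'a^3) = y \<longleftrightarrow> x$1 = y$1 \<and> x$2 = y$2 \<and> x$3 = y$3"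
  by (simp add: vec_eq_iff forall_3)

lemma vec3_0: "(x::'a::zero^3) = 0 \<longleftrightarrow> x$1 = 0 \<and> x$2 = 0 \<and> x$3 = 0"
  by (simp add: vec_eq_iff forall_3)

lemma eig_iff: "(\<exists>z \<mu>. z \<noteq> 0 \<and> mk u w *v z = \<mu> *s z) \<longleftrightarrow>
   (\<exists>z1 z2 z3 \<mu>. (z1 \<noteq> 0 \<or> z2 \<noteq> 0 \<or> z3 \<noteq> (0::'a::field)) \<and>
      u$1 * z2 + w$1 * z3 = \<mu> * z1 \<and> z1 + u$2 * z2 + w$2 * z3 = \<mu> * z2 \<and> u$3 * z2 + w$3 * z3 = \<mu> * z3)"
proof
  assume "\<exists>z \<mu>. z \<noteq> 0 \<and> mk u w *v z = \<mu> *s z"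
  then obtain z \<mu> where "z \<noteq> 0" "mk u w *v z = \<mu> *s z" by blast
  then show "\<exists>z1 z2 z3 \<mu>. (z1 \<noteq> 0 \<or> z2 \<noteq> 0 \<or> z3 \<noteq> 0) \<and>
      u$1 * z2 + w$1 * z3 = \<mu> * z1 \<and> z1 + u$2 * z2 + w$2 * z3 = \<mu> * z2 \<and> u$3 * z2 + w$3 * z3 = \<mu> * z3"
    by (intro exI[of _ "z$1"] exI[of _ "z$2"] exI[of _ "z$3"] exI[of _ \<mu>])
       (auto simp: vec3_eq vec3_0 mk_mulv)
next
  assume "\<exists>z1 z2 z3 \<mu>. (z1 \<noteq> 0 \<or> z2 \<noteq> 0 \<or> z3 \<noteq> (0::'a)) \<and>
      u$1 * z2 + w$1 * z3 = \<mu> * z1 \<and> z1 + u$2 * z2 + w$2 * z3 = \<mu> * z2 \<and> u$3 * z2 + w$3 * z3 = \<mu> * z3"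
  then obtain z1 z2 z3 \<mu> where h: "(z1 \<noteq> 0 \<or> z2 \<noteq> 0 \<or> z3 \<noteq> (0::'a))"
      "u$1 * z2 + w$1 * z3 = \<mu> * z1" "z1 + u$2 * z2 + w$2 * z3 = \<mu> * z2" "u$3 * z2 + w$3 * z3 = \<mu> * z3"
    by blast
  define z :: "'a^3" where "z = (\<chi> i. if i = 1 then z1 else if i = 2 then z2 else z3)"
  have zc: "z$1 = z1" "z$2 = z2" "z$3 = z3" by (simp_all add: z_def)
  show "\<exists>z \<mu>. z \<noteq> 0 \<and> mk u w *v z = \<mu> *s z"
    by (intro exI[of _ z] exI[of _ \<mu>]) (use h in \<open>auto simp: vec3_eq vec3_0 mk_mulv zc\<close>)
qed

lemma noeig_mk: "noeig (mk u w) \<longleftrightarrow> u$3 \<noteq> 0 \<and> (\<forall>t. pol (cf u w) t \<noteq> 0)"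
proof -
  have "(\<exists>z \<mu>. z \<noteq> 0 \<and> mk u w *v z = \<mu> *s z) \<longleftrightarrow> u$3 = 0 \<or> (\<exists>t. pol (cf u w) t = 0)"
    unfolding eig_iff
  proof (intro iffI)
    assume "\<exists>z1 z2 z3 \<mu>. (z1 \<noteq> 0 \<or> z2 \<noteq> 0 \<or> z3 \<noteq> (0::'a)) \<and>
      u$1 * z2 + w$1 * z3 = \<mu> * z1 \<and> z1 + u$2 * z2 + w$2 * z3 = \<mu> * z2 \<and> u$3 * z2 + w$3 * z3 = \<mu> * z3"
    then obtain z1 z2 z3 \<mu> where h: "(z1 \<noteq> 0 \<or> z2 \<noteq> 0 \<or> z3 \<noteq> (0::'a))"
      "u$1 * z2 + w$1 * z3 = \<mu> * z1" "z1 + u$2 * z2 + w$2 * z3 = \<mu> * z2" "u$3 * z2 + w$3 * z3 = \<mu> * z3"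
      by blast
    show "u$3 = 0 \<or> (\<exists>t. pol (cf u w) t = 0)"
    proof (cases "u$3 = 0")
      case False
      have "z3 \<noteq> 0"
      proof
        assume z3: "z3 = 0"
        then have "z2 = 0" using h(4) False by simp
        then have "z1 = 0" using h(3) z3 by simp
        then show False using h(1) z3 \<open>z2 = 0\<close> by simp
      qed
      have "z3 * pol (cf u w) \<mu> = 0"
      proof -
        have e: "u$3 * (u$1 * z2 + w$1 * z3 - \<mu> * z1) = 0" using h(2) by simp
        have e2: "u$3 * z1 = u$3 * (\<mu> * z2 - u$2 * z2 - w$2 * z3)" using h(3) by algebra
        have e3: "u$3 * z2 = (\<mu> - w$3) * z3" using h(4) by algebra
        have "z3 * pol (cf u w) \<mu> = - (u$3 * (u$1 * z2 + w$1 * z3 - \<mu> * z1))"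
          unfolding pol_def cf_def using e2 e3 by (simp add: algebra_simps power2_eq_square power3_eq_cube) algebra
        then show ?thesis using e by simp
      qed
      then show ?thesis using \<open>z3 \<noteq> 0\<close> by auto
    qed simp
  next
    assume "u$3 = 0 \<or> (\<exists>t. pol (cf u w) t = 0)"
    then show "\<exists>z1 z2 z3 \<mu>. (z1 \<noteq> 0 \<or> z2 \<noteq> 0 \<or> z3 \<noteq> (0::'a)) \<and>
      u$1 * z2 + w$1 * z3 = \<mu> * z1 \<and> z1 + u$2 * z2 + w$2 * z3 = \<mu> * z2 \<and> u$3 * z2 + w$3 * z3 = \<mu> * z3"
    proof (cases "u$3 = 0")
      case True
      then have u3: "u$3 = 0" .
      show ?thesis
      proof (cases "w$3^2 - u$2 * w$3 - u$1 = 0")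
        case True
        show ?thesis
          by (rule exI[of _ "w$3 - u$2"], rule exI[of _ 1], rule exI[of _ 0], rule exI[of _ "w$3"])
             (use True u3 in \<open>simp add: algebra_simps power2_eq_square\<close>)
      next
        case False
        define d where "d = w$3^2 - u$2 * w$3 - u$1"
        have d: "d \<noteq> 0" using False d_def by simp
        define Z1 where "Z1 = (u$1 * w$2 - w$1 * (u$2 - w$3)) / d"
        define Z2 where "Z2 = (w$3 * w$2 + w$1) / d"
        have a: "u$1 * Z2 + w$1 * 1 = w$3 * Z1"
          unfolding Z1_def Z2_def using d
          apply (simp add: field_simps)
          apply (simp add: d_def power2_eq_square)
          apply (thin_tac "_ \<noteq> _")
          apply algebra
          done
        have b: "Z1 + u$2 * Z2 + w$2 * 1 = w$3 * Z2"
          unfolding Z1_def Z2_def using d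
          apply (simp add: field_simps)
          apply (simp add: d_def power2_eq_square)
          apply (thin_tac "_ \<noteq> _")
          apply algebra
          done
        show ?thesis
          by (rule exI[of _ Z1], rule exI[of _ Z2], rule exI[of _ 1], rule exI[of _ "w$3"])
             (use a b u3 in simp)
      qed
    next
      case False
      assume "u$3 = 0 \<or> (\<exists>t. pol (cf u w) t = 0)"
      then obtain t where t: "pol (cf u w) t = 0" using False by blast
      show ?thesis
          by (rule exI[of _ "- (u$2 - t) * (t - w$3) - w$2 * u$3"], rule exI[of _ "t - w$3"],
              rule exI[of _ "u$3"], rule exI[of _ t])
             (use False t in \<open>simp add: pol_def cf_def algebra_simps power2_eq_square power3_eq_cube\<close>)
    qed
  qed
  then show ?thesis unfolding noeig_def by blast
qed

lemma card_filter_sum: "finite A \<Longrightarrow> card {x\<in>A. P x} = (\<Sum>x\<in>A. if P x then 1 else 0)"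
  by (simp add: sum.If_cases Int_def)

lemma swap_count: "finite A \<Longrightarrow> finite B \<Longrightarrow>
   (\<Sum>a\<in>A. card {b\<in>B. P a b}) = (\<Sum>b\<in>B. card {a\<in>A. P a b})"
  by (simp add: card_filter_sum sum.swap[of _ A B])

lemma pol_poly: "pol c t = poly [:fst c, fst (snd c), snd (snd c), 1:] t"
  by (simp add: pol_def algebra_simps power2_eq_square power3_eq_cube)

lemma roots_le3: "card {t. pol c t = 0} \<le> 3"
proof -
  have "card {t. poly [:fst c, fst (snd c), snd (snd c), 1:] t = 0} \<le> degree [:fst c, fst (snd c), snd (snd c), (1::'a::field):]"
    by (rule card_poly_roots_bound) simp
  then show ?thesis by (simp add: pol_poly)
qed

lemma card_pairs: "finite R \<Longrightarrow> card {(r,s). r\<in>R \<and> s\<in>R \<and> r\<noteq>s} = card R * (card R - 1)"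
proof -
  assume f: "finite R"
  have "{(r,s). r\<in>R \<and> s\<in>R \<and> r\<noteq>s} = Sigma R (\<lambda>r. R - {r})" by auto
  then show ?thesis using f by (simp add: card_SigmaI)
qed

lemma card_triples: "finite R \<Longrightarrow> card {(r,s,t). r\<in>R \<and> s\<in>R \<and> t\<in>R \<and> r\<noteq>s \<and> r\<noteq>t \<and> s\<noteq>t}
     = card R * (card R - 1) * (card R - 2)"
proof -
  assume f: "finite R"
  have "{(r,s,t). r\<in>R \<and> s\<in>R \<and> t\<in>R \<and> r\<noteq>s \<and> r\<noteq>t \<and> s\<noteq>t} = Sigma R (\<lambda>r. Sigma (R - {r}) (\<lambda>s. R - {r,s}))" by auto
  moreover have "card (Sigma R (\<lambda>r. Sigma (R - {r}) (\<lambda>s. R - {r,s}))) = card R * (card R - 1) * (card R - 2)"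
  proof -
    have "card (Sigma R (\<lambda>r. Sigma (R - {r}) (\<lambda>s. R - {r,s}))) = (\<Sum>r\<in>R. (\<Sum>s\<in>R - {r}. card (R - {r,s})))"
      using f by (simp add: card_SigmaI)
    also have "\<dots> = (\<Sum>r\<in>R. (\<Sum>s\<in>R - {r}. card R - 2))"
      by (rule sum.cong[OF refl], rule sum.cong[OF refl]) (use f in \<open>auto simp: card_Diff_subset\<close>)
    also have "\<dots> = card R * (card R - 1) * (card R - 2)" using f by simp
    finally show ?thesis .
  qed
  ultimately show ?thesis by simp
qed

lemma pol_diff: "pol c r - pol c s = (r - s) * (r^2 + r * s + s^2 + snd (snd c) * (r + s) + fst (snd c))"
  by (simp add: pol_def algebra_simps power2_eq_square power3_eq_cube)

lemma two_rel: "pol c r = 0 \<Longrightarrow> pol c s = 0 \<Longrightarrow> r \<noteq> s \<Longrightarrow>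
   fst (snd c) = - (r^2 + r * s + s^2) - snd (snd c) * (r + s)"
proof -
  assume a: "pol c r = 0" "pol c s = 0" "r \<noteq> s"
  then have "(r - s) * (r^2 + r * s + s^2 + snd (snd c) * (r + s) + fst (snd c)) = 0"
    using pol_diff[of c r s] by simp
  then have "r^2 + r * s + s^2 + snd (snd c) * (r + s) + fst (snd c) = 0" using a(3) by simp
  then show ?thesis by (simp add: eq_neg_iff_add_eq_0 algebra_simps)
qed

lemma c0_rel: "pol c r = 0 \<Longrightarrow> fst c = - (r^3 + snd (snd c) * r^2 + fst (snd c) * r)"
  by (simp add: pol_def algebra_simps eq_neg_iff_add_eq_0)

lemma card_UNIV_prod2: "card (UNIV :: ('a::finite \<times> 'a) set) = CARD('a) * CARD('a)"
  by (simp add: card_cartesian_product flip: UNIV_Times_UNIV)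

lemma one_root: "card {c::'a::{finite,field}\<times>'a\<times>'a. pol c t = 0} = CARD('a) ^ 2"
proof -
  define f where "f = (\<lambda>(c1::'a,c2::'a). (- (t^3 + c2 * t^2 + c1 * t), c1, c2))"
  have "{c::'a\<times>'a\<times>'a. pol c t = 0} = f ` UNIV"
  proof (rule set_eqI, rule iffI)
    fix c :: "'a\<times>'a\<times>'a" assume "c \<in> {c. pol c t = 0}"
    then have "c = f (fst (snd c), snd (snd c))" using c0_rel[of c t] by (cases c) (auto simp: f_def)
    then show "c \<in> range f" by blast
  next
    fix c assume "c \<in> range f"
    then show "c \<in> {c. pol c t = 0}" by (auto simp: f_def pol_def)
  qed
  moreover have "inj f" by (auto simp: inj_def f_def)
  ultimately show ?thesis by (simp add: card_image card_UNIV_prod2 power2_eq_square)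
qed

lemma two_roots: "r \<noteq> s \<Longrightarrow> card {c::'a::{finite,field}\<times>'a\<times>'a. pol c r = 0 \<and> pol c s = 0} = CARD('a)"
proof -
  assume rs: "r \<noteq> s"
  define g where "g = (\<lambda>c2::'a. - (r^2 + r * s + s^2) - c2 * (r + s))"
  define f where "f = (\<lambda>c2::'a. (- (r^3 + c2 * r^2 + g c2 * r), g c2, c2))"
  have "{c::'a\<times>'a\<times>'a. pol c r = 0 \<and> pol c s = 0} = f ` UNIV"
  proof (rule set_eqI, rule iffI)
    fix c :: "'a\<times>'a\<times>'a" assume "c \<in> {c. pol c r = 0 \<and> pol c s = 0}"
    then have h: "pol c r = 0" "pol c s = 0" by auto
    have "c = f (snd (snd c))" using c0_rel[OF h(1)] two_rel[OF h rs]
      by (auto simp: f_def g_def prod_eq_iff)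
    then show "c \<in> range f" by blast
  next
    fix c assume "c \<in> range f"
    then obtain c2 where c: "c = f c2" by blast
    have r: "pol c r = 0" unfolding c by (simp add: f_def pol_def)
    have "pol c r - pol c s = 0" unfolding c pol_diff by (simp add: f_def g_def)
    then show "c \<in> {c. pol c r = 0 \<and> pol c s = 0}" using r by simp
  qed
  moreover have "inj f" by (auto simp: inj_def f_def)
  ultimately show ?thesis by (simp add: card_image)
qed

lemma three_roots: "r \<noteq> s \<Longrightarrow> r \<noteq> t \<Longrightarrow> s \<noteq> t \<Longrightarrow>
  {c::'a::field\<times>'a\<times>'a. pol c r = 0 \<and> pol c s = 0 \<and> pol c t = 0} = {(-(r * s * t), r * s+r * t+s * t, -(r+s+t))}"
proof (rule set_eqI, rule iffI)
  assume d: "r \<noteq> s" "r \<noteq> t" "s \<noteq> t"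
  fix c :: "'a\<times>'a\<times>'a" assume "c \<in> {c. pol c r = 0 \<and> pol c s = 0 \<and> pol c t = 0}"
  then have h: "pol c r = 0" "pol c s = 0" "pol c t = 0" by auto
  have e1: "fst (snd c) = - (r^2 + r * s + s^2) - snd (snd c) * (r + s)" by (rule two_rel[OF h(1,2) d(1)])
  have e2: "fst (snd c) = - (r^2 + r * t + t^2) - snd (snd c) * (r + t)" by (rule two_rel[OF h(1,3) d(2)])
  have "(s - t) * (r + s + t + snd (snd c)) = 0" using e1 e2 by algebra
  then have X: "r + s + t + snd (snd c) = 0" using d(3) by simp
  then have c2: "snd (snd c) = - (r + s + t)" by algebra
  have c1: "fst (snd c) = r * s+r * t+s * t" using e1 c2 by (simp add: algebra_simps power2_eq_square)
  have c0: "fst c = -(r * s * t)" using c0_rel[OF h(1)] c1 c2 by (simp add: algebra_simps power2_eq_square power3_eq_cube)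
  show "c \<in> {(-(r * s * t), r * s+r * t+s * t, -(r+s+t))}" using c0 c1 c2 by (auto simp: prod_eq_iff)
next
  fix c assume "c \<in> {(-(r * s * t), r * s+r * t+s * t, -(r+s+t))}"
  then show "c \<in> {c. pol c r = 0 \<and> pol c s = 0 \<and> pol c t = 0}"
    by (simp add: pol_def algebra_simps power2_eq_square power3_eq_cube)
qed

lemma k_identity: "(k::nat) \<le> 3 \<Longrightarrow> 6 * (if k = 0 then 1 else 0) + 6 * k + k * (k - 1) * (k - 2) = 6 + 3 * (k * (k - 1))"
  by (cases k; cases "k - 1"; cases "k - 2") auto

theorem count_noroot:
  "3 * card {c::'a::{finite,field}\<times>'a\<times>'a. \<forall>t. pol c t \<noteq> 0} = CARD('a)^3 - CARD('a)"
proof -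
  let ?q = "CARD('a)"
  let ?C = "UNIV :: ('a\<times>'a\<times>'a) set"
  define k where "k c = card {t. pol c t = 0}" for c :: "'a\<times>'a\<times>'a"
  define D2 where "D2 = {(r,s). r\<in>(UNIV::'a set) \<and> s\<in>UNIV \<and> r\<noteq>s}"
  define D3 where "D3 = {(r,s,t). r\<in>(UNIV::'a set) \<and> s\<in>UNIV \<and> t\<in>UNIV \<and> r\<noteq>s \<and> r\<noteq>t \<and> s\<noteq>t}"
  have cD2: "card D2 = ?q * (?q - 1)" unfolding D2_def by (rule card_pairs) simp
  have cD3: "card D3 = ?q * (?q - 1) * (?q - 2)" unfolding D3_def by (rule card_triples) simp
  have I1: "(\<Sum>c\<in>?C. k c) = ?q * ?q^2"
  proof -
    have "(\<Sum>c\<in>?C. k c) = (\<Sum>c\<in>?C. card {t\<in>UNIV. pol c t = 0})" by (simp add: k_def)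
    also have "\<dots> = (\<Sum>t\<in>UNIV. card {c\<in>?C. pol c t = 0})" by (rule swap_count) auto
    also have "\<dots> = (\<Sum>t\<in>(UNIV::'a set). ?q^2)" using one_root[where 'a='a] by simp
    finally show ?thesis by simp
  qed
  have I2: "(\<Sum>c\<in>?C. k c * (k c - 1)) = ?q * (?q - 1) * ?q"
  proof -
    have "(\<Sum>c\<in>?C. k c * (k c - 1)) = (\<Sum>c\<in>?C. card {p\<in>D2. pol c (fst p) = 0 \<and> pol c (snd p) = 0})"
    proof (rule sum.cong[OF refl])
      fix c :: "'a\<times>'a\<times>'a"
      have "{p\<in>D2. pol c (fst p) = 0 \<and> pol c (snd p) = 0} = {(r,s). r\<in>{t. pol c t = 0} \<and> s\<in>{t. pol c t = 0} \<and> r\<noteq>s}"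
        unfolding D2_def by auto
      then show "k c * (k c - 1) = card {p\<in>D2. pol c (fst p) = 0 \<and> pol c (snd p) = 0}"
        unfolding k_def using card_pairs[of "{t. pol c t = 0}"] by simp
    qed
    also have "\<dots> = (\<Sum>p\<in>D2. card {c\<in>?C. pol c (fst p) = 0 \<and> pol c (snd p) = 0})"
      by (rule swap_count) (auto simp: D2_def)
    also have "\<dots> = (\<Sum>p\<in>D2. ?q)"
      by (rule sum.cong[OF refl]) (auto simp: D2_def two_roots[where 'a='a])
    finally show ?thesis using cD2 by simp
  qed
  have I3: "(\<Sum>c\<in>?C. k c * (k c - 1) * (k c - 2)) = ?q * (?q - 1) * (?q - 2)"
  proof -
    have "(\<Sum>c\<in>?C. k c * (k c - 1) * (k c - 2)) = (\<Sum>c\<in>?C. card {p\<in>D3. pol c (fst p) = 0 \<and> pol c (fst (snd p)) = 0 \<and> pol c (snd (snd p)) = 0})"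
    proof (rule sum.cong[OF refl])
      fix c :: "'a\<times>'a\<times>'a"
      have "{p\<in>D3. pol c (fst p) = 0 \<and> pol c (fst (snd p)) = 0 \<and> pol c (snd (snd p)) = 0} =
         {(r,s,t). r\<in>{t. pol c t = 0} \<and> s\<in>{t. pol c t = 0} \<and> t\<in>{t. pol c t = 0} \<and> r\<noteq>s \<and> r\<noteq>t \<and> s\<noteq>t}"
        unfolding D3_def by auto
      then show "k c * (k c - 1) * (k c - 2) = card {p\<in>D3. pol c (fst p) = 0 \<and> pol c (fst (snd p)) = 0 \<and> pol c (snd (snd p)) = 0}"
        unfolding k_def using card_triples[of "{t. pol c t = 0}"] by simp
    qed
    also have "\<dots> = (\<Sum>p\<in>D3. card {c\<in>?C. pol c (fst p) = 0 \<and> pol c (fst (snd p)) = 0 \<and> pol c (snd (snd p)) = 0})"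
      by (rule swap_count) (auto simp: D3_def)
    also have "\<dots> = (\<Sum>p\<in>D3. 1)"
    proof (rule sum.cong[OF refl])
      fix p assume "p \<in> D3"
      then obtain r s t where p: "p = (r,s,t)" "r \<noteq> s" "r \<noteq> t" "s \<noteq> t" unfolding D3_def by auto
      show "card {c\<in>?C. pol c (fst p) = 0 \<and> pol c (fst (snd p)) = 0 \<and> pol c (snd (snd p)) = 0} = 1"
        using three_roots[OF p(2-4)] p(1) by simp
    qed
    finally show ?thesis using cD3 by simp
  qed
  have "(\<Sum>c\<in>?C. 6 * (if k c = 0 then 1 else 0) + 6 * k c + k c * (k c - 1) * (k c - 2))
      = (\<Sum>c\<in>?C. 6 + 3 * (k c * (k c - 1)))"
    by (rule sum.cong[OF refl]) (rule k_identity, use roots_le3 k_def in auto)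
  then have "6 * (\<Sum>c\<in>?C. (if k c = 0 then 1 else 0)) + 6 * (\<Sum>c\<in>?C. k c) + (\<Sum>c\<in>?C. k c * (k c - 1) * (k c - 2))
      = 6 * card ?C + 3 * (\<Sum>c\<in>?C. k c * (k c - 1))"
    by (simp add: sum.distrib sum_distrib_left)
  moreover have "(\<Sum>c\<in>?C. (if k c = 0 then 1 else 0)) = card {c::'a\<times>'a\<times>'a. \<forall>t. pol c t \<noteq> 0}"
  proof -
    have "(\<Sum>c\<in>?C. (if k c = 0 then 1 else 0)) = card {c\<in>?C. k c = 0}" by (rule card_filter_sum[symmetric]) simp
    moreover have "{c\<in>?C. k c = 0} = {c. \<forall>t. pol c t \<noteq> 0}" by (auto simp: k_def)
    ultimately show ?thesis by simp
  qed
  moreover have "card ?C = ?q * (?q * ?q)" by (simp add: card_cartesian_product flip: UNIV_Times_UNIV)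
  ultimately have E: "6 * card {c::'a\<times>'a\<times>'a. \<forall>t. pol c t \<noteq> 0} + 6 * (?q * ?q^2) + ?q * (?q - 1) * (?q - 2)
       = 6 * (?q * (?q * ?q)) + 3 * (?q * (?q - 1) * ?q)"
    using I1 I2 I3 by simp
  have q1: "?q \<ge> 2"
  proof -
    have "(0::'a) \<noteq> 1" by simp
    then have "card {0::'a, 1} = 2" by simp
    moreover have "card {0::'a, 1} \<le> ?q" by (rule card_mono) auto
    ultimately show ?thesis by simp
  qed
  define N where "N = card {c::'a\<times>'a\<times>'a. \<forall>t. pol c t \<noteq> 0}"
  obtain m where m: "?q = m + 2" using q1 by (metis add.commute le_Suc_ex)
  have "6 * N + 6 * ((m+2) * (m+2)^2) + (m+2) * (m + 1) * m = 6 * ((m+2) * ((m+2) * (m+2))) + 3 * ((m+2) * (m+1) * (m+2))"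
    using E unfolding N_def m by simp
  then have "6 * N = 2 * ((m+2)^3 - (m+2))"
    by (simp add: algebra_simps power2_eq_square power3_eq_cube) 
  then show ?thesis unfolding N_def m by simp
qed

definition v3 :: "'a \<Rightarrow> 'a \<Rightarrow> 'a \<Rightarrow> 'a^3" where
  "v3 a b c = (\<chi> i. if i = 1 then a else if i = 2 then b else c)"

lemma v3_nth[simp]: "v3 a b c $ 1 = a" "v3 a b c $ 2 = b" "v3 a b c $ 3 = c"
  by (simp_all add: v3_def)

lemma v3_eta: "v3 (x$1) (x$2) (x$3) = x"
  by (simp add: vec3_eq)

lemma card_u3: "card {u::'a::{finite,field}^3. u$3 \<noteq> 0} = CARD('a) * CARD('a) * (CARD('a) - 1)"
proof -
  define f where "f = (\<lambda>(a::'a,b::'a,c::'a). v3 a b c)"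
  have "{u::'a^3. u$3 \<noteq> 0} = f ` (UNIV \<times> UNIV \<times> (UNIV - {0}))"
  proof (rule set_eqI, rule iffI)
    fix u :: "'a^3" assume "u \<in> {u. u$3 \<noteq> 0}"
    then have "u = f (u$1, u$2, u$3)" "u$3 \<noteq> 0" by (simp_all add: f_def v3_eta)
    then show "u \<in> f ` (UNIV \<times> UNIV \<times> (UNIV - {0}))" by blast
  qed (auto simp: f_def)
  moreover have "inj f" unfolding inj_def f_def by (auto simp: vec3_eq)
  ultimately have "card {u::'a^3. u$3 \<noteq> 0} = card ((UNIV::'a set) \<times> (UNIV::'a set) \<times> (UNIV - {0::'a}))"
    by (metis card_image inj_on_subset subset_UNIV)
  also have "\<dots> = CARD('a) * (CARD('a) * (CARD('a) - 1))"
    by (simp add: card_cartesian_product card_Diff_singleton)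
  finally show ?thesis by simp
qed

lemma card_cf: "(u::'a::{finite,field}^3)$3 \<noteq> 0 \<Longrightarrow> card {w. \<forall>t. pol (cf u w) t \<noteq> 0} = card {c::'a\<times>'a\<times>'a. \<forall>t. pol c t \<noteq> 0}"
proof -
  assume u3: "u$3 \<noteq> 0"
  have inj: "inj (cf u)"
  proof (rule injI)
    fix w w' assume e: "cf u w = cf u w'"
    then have e3: "w$3 = w'$3" by (simp add: cf_def)
    then have "u$3 * w$2 = u$3 * w'$2" using e by (simp add: cf_def)
    then have e2: "w$2 = w'$2" using u3 by simp
    have "u$3 * w$1 = u$3 * w'$1" using e e3 by (simp add: cf_def)
    then have e1: "w$1 = w'$1" using u3 by simp
    show "w = w'" using e1 e2 e3 by (simp add: vec3_eq)
  qed
  have surj: "\<exists>w. c = cf u w" for c :: "'a\<times>'a\<times>'a"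
  proof -
    obtain c0 c1 c2 where c: "c = (c0, c1, c2)" by (cases c) auto
    define w3 where "w3 = - c2 - u$2"
    have a: "u$3 * ((u$1 * w3 - c0) / u$3) = u$1 * w3 - c0" using u3 by simp
    have b: "u$3 * ((u$2 * w3 - u$1 - c1) / u$3) = u$2 * w3 - u$1 - c1" using u3 by simp
    have "cf u (v3 ((u$1 * w3 - c0) / u$3) ((u$2 * w3 - u$1 - c1) / u$3) w3) = c"
      unfolding cf_def c v3_nth a b by (simp add: w3_def)
    then show ?thesis by metis
  qed
  have "cf u ` {w. \<forall>t. pol (cf u w) t \<noteq> 0} = {c. \<forall>t. pol c t \<noteq> 0}"
  proof (rule set_eqI, rule iffI)
    fix c :: "'a\<times>'a\<times>'a" assume "c \<in> {c. \<forall>t. pol c t \<noteq> 0}"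
    moreover obtain w where "c = cf u w" using surj by blast
    ultimately show "c \<in> cf u ` {w. \<forall>t. pol (cf u w) t \<noteq> 0}" by blast
  qed auto
  moreover have "card (cf u ` {w. \<forall>t. pol (cf u w) t \<noteq> 0}) = card {w. \<forall>t. pol (cf u w) t \<noteq> 0}"
    by (rule card_image[OF inj_on_subset[OF inj subset_UNIV]])
  ultimately show ?thesis by simp
qed

lemma card_mk: "card {(u,w). noeig (mk u w :: 'a::{finite,field}^3^3)} =
    CARD('a) * CARD('a) * (CARD('a) - 1) * card {c::'a\<times>'a\<times>'a. \<forall>t. pol c t \<noteq> 0}"
proof -
  have "{(u,w). noeig (mk u w :: 'a^3^3)} = Sigma {u. u$3 \<noteq> 0} (\<lambda>u. {w. \<forall>t. pol (cf u w) t \<noteq> 0})"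
    by (auto simp: noeig_mk)
  then have "card {(u,w). noeig (mk u w :: 'a^3^3)} = (\<Sum>u\<in>{u::'a^3. u$3 \<noteq> 0}. card {w. \<forall>t. pol (cf u w) t \<noteq> 0})"
    by (simp add: card_SigmaI)
  also have "\<dots> = (\<Sum>u\<in>{u::'a^3. u$3 \<noteq> 0}. card {c::'a\<times>'a\<times>'a. \<forall>t. pol c t \<noteq> 0})"
    by (rule sum.cong[OF refl]) (simp add: card_cf)
  finally show ?thesis by (simp add: card_u3)
qed

lemma mulv_e1: "(B::'a::field^3^3) *v v3 1 0 0 = (\<chi> i. B$i$1)"
  by (simp add: vec_eq_iff matrix_vector_mult_def sum_3 v3_def)

lemma card_Mp: "card {B::'a::{finite,field}^3^3. B *v v3 1 0 0 = v3 0 1 0 \<and> noeig B} =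
    CARD('a) * CARD('a) * (CARD('a) - 1) * card {c::'a\<times>'a\<times>'a. \<forall>t. pol c t \<noteq> 0}"
proof -
  have "{B::'a^3^3. B *v v3 1 0 0 = v3 0 1 0 \<and> noeig B} = (\<lambda>(u,w). mk u w) ` {(u,w). noeig (mk u w :: 'a^3^3)}"
  proof (rule set_eqI, rule iffI)
    fix B :: "'a^3^3" assume "B \<in> {B. B *v v3 1 0 0 = v3 0 1 0 \<and> noeig B}"
    then have h: "B *v v3 1 0 0 = v3 0 1 0" "noeig B" by auto
    have c1: "B$i$1 = (if i = 2 then 1 else 0)" for i
    proof -
      have "(B *v v3 1 0 0)$i = v3 0 1 0 $ i" using h(1) by simp
      then show ?thesis unfolding mulv_e1 by (simp add: v3_def)
    qed
    have "B = mk (\<chi> i. B$i$2) (\<chi> i. B$i$3)"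
      unfolding mk_def vec_eq_iff using c1 by (auto simp: forall_3)
    then show "B \<in> (\<lambda>(u,w). mk u w) ` {(u,w). noeig (mk u w :: 'a^3^3)}"
      using h(2) by (auto intro!: image_eqI[of _ _ "((\<chi> i. B$i$2), (\<chi> i. B$i$3))"])
  next
    fix B :: "'a^3^3" assume "B \<in> (\<lambda>(u,w). mk u w) ` {(u,w). noeig (mk u w :: 'a^3^3)}"
    then obtain u w where B: "B = mk u w" "noeig (mk u w)" by auto
    have "B *v v3 1 0 0 = v3 0 1 0" unfolding B(1) by (simp add: vec3_eq mk_mulv)
    then show "B \<in> {B. B *v v3 1 0 0 = v3 0 1 0 \<and> noeig B}" using B by simp
  qed
  moreover have "inj (\<lambda>(u,w). mk u w :: 'a^3^3)"
  proof (rule injI, clarify)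
    fix u w u' w' :: "'a^3" assume e: "mk u w = mk u' w'"
    have "u$i = u'$i \<and> w$i = w'$i" for i
    proof -
      have "mk u w $ i $ 2 = mk u' w' $ i $ 2" "mk u w $ i $ 3 = mk u' w' $ i $ 3" using e by simp_all
      then show ?thesis by (simp add: mk_def)
    qed
    then show "u = u' \<and> w = w'" by (simp add: vec_eq_iff)
  qed
  moreover have "card ((\<lambda>(u,w). mk u w :: 'a^3^3) ` {(u,w). noeig (mk u w :: 'a^3^3)}) = card {(u,w). noeig (mk u w :: 'a^3^3)}"
    by (rule card_image[OF inj_on_subset[OF calculation(2) subset_UNIV]])
  ultimately show ?thesis using card_mk[where 'a='a] by simp
qed

lemma span_sing: "vec.span {x} = range (\<lambda>k. k *s (x::'a::field^'n))"
  by (rule vec.span_singleton)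

lemma cmat_mulv: "(\<chi> i j. c * (A::'a::field^'n^'m)$i$j) *v z = c *s (A *v z)"
  by (simp add: vec_eq_iff matrix_vector_mult_def sum_distrib_left algebra_simps)

lemma act_class: "pgl_act (pgl_class A) (vec.span {x}) = vec.span {(A::'a::field^3^3) *v x}"
proof (rule set_eqI, rule iffI)
  fix v assume "v \<in> pgl_act (pgl_class A) (vec.span {x})"
  then obtain c k where "v = (\<chi> i j. c * A$i$j) *v (k *s x)"
    unfolding pgl_act_def pgl_class_def span_sing by blast
  then have "v = (c * k) *s (A *v x)" by (simp add: cmat_mulv mulv_scale)
  then show "v \<in> vec.span {A *v x}" unfolding span_sing by blast
next
  fix v assume "v \<in> vec.span {A *v x}"
  then obtain k where v: "v = k *s (A *v x)" unfolding span_sing by blast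
  have "A \<in> pgl_class A" unfolding pgl_class_def by (intro CollectI exI[of _ 1]) (simp add: vec_eq_iff)
  moreover have "v = A *v (k *s x)" using v by (simp add: mulv_scale)
  moreover have "k *s x \<in> vec.span {x}" unfolding span_sing by blast
  ultimately show "v \<in> pgl_act (pgl_class A) (vec.span {x})" unfolding pgl_act_def by blast
qed

lemma pt_iff: "p \<in> pg_points \<longleftrightarrow> (\<exists>x. x \<noteq> 0 \<and> p = vec.span {x})"
  unfolding pg_points_def by blast

lemma span_eq_mult: "vec.span {x} = vec.span {y} \<Longrightarrow> \<exists>k. y = k *s (x::'a::field^'n)"
proof -
  assume "vec.span {x} = vec.span {y}"
  then have "y \<in> vec.span {x}" by (simp add: vec.span_base)
  then show ?thesis unfolding span_sing by blast
qed

lemma span_scale: "k \<noteq> 0 \<Longrightarrow> vec.span {k *s x} = vec.span {(x::'a::field^'n)}"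
proof -
  assume k: "k \<noteq> 0"
  have "range (\<lambda>j. j *s (k *s x)) = range (\<lambda>j. j *s x)"
  proof (rule set_eqI, rule iffI)
    fix v assume "v \<in> range (\<lambda>j. j *s (k *s x))"
    then show "v \<in> range (\<lambda>j. j *s x)" by auto
  next
    fix v assume "v \<in> range (\<lambda>j. j *s x)"
    then obtain j where "v = j *s x" by blast
    then have "v = (j / k) *s (k *s x)" using k by simp
    then show "v \<in> range (\<lambda>j. j *s (k *s x))" by blast
  qed
  then show ?thesis unfolding span_sing .
qed

lemma noeig_inv: "noeig A \<Longrightarrow> invertible A"
proof -
  assume "noeig A"
  then have "\<forall>z. A *v z = 0 \<longrightarrow> z = 0" unfolding noeig_def by (metis vec.scale_zero_left)
  then show ?thesis using matrix_left_invertible_ker invertible_left_inverse by blast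
qed

lemma inv_ker: "invertible (A::'a::field^'n^'n) \<Longrightarrow> A *v z = 0 \<Longrightarrow> z = 0"
  using matrix_left_invertible_ker invertible_left_inverse by blast

lemma fpf_iff: "invertible A \<Longrightarrow> fixed_point_free (pgl_class A) \<longleftrightarrow> noeig A"
proof
  assume A: "invertible A" and f: "fixed_point_free (pgl_class A)"
  show "noeig A" unfolding noeig_def
  proof (intro allI impI notI)
    fix z \<mu> assume z: "z \<noteq> 0" and e: "A *v z = \<mu> *s z"
    have "\<mu> \<noteq> 0" using inv_ker[OF A] z e by fastforce
    then have "pgl_act (pgl_class A) (vec.span {z}) = vec.span {z}"
      by (simp add: act_class e span_scale)
    moreover have "vec.span {z} \<in> pg_points" using z pt_iff by blast
    ultimately show False using f unfolding fixed_point_free_def by blast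
  qed
next
  assume A: "invertible A" and n: "noeig A"
  show "fixed_point_free (pgl_class A)" unfolding fixed_point_free_def
  proof (intro ballI notI)
    fix p assume "p \<in> pg_points" and e: "pgl_act (pgl_class A) p = p"
    then obtain x where x: "x \<noteq> 0" "p = vec.span {x}" using pt_iff by blast
    then have "vec.span {x} = vec.span {A *v x}" using e by (simp add: act_class)
    then obtain k where "A *v x = k *s x" using span_eq_mult by blast
    then show False using n x unfolding noeig_def by blast
  qed
qed

lemma P_mulv: "(\<chi> i j. if j = 1 then x$i else if j = 2 then y$i else z$i) *v v
   = v$1 *s x + v$2 *s y + v$3 *s z" for v x y z :: "'a::field^3"
  by (simp add: vec_eq_iff matrix_vector_mult_def sum_3 algebra_simps)

lemma basis_P:
  fixes x y :: "'a::field^3"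
  assumes x: "x \<noteq> 0" and y: "y \<notin> vec.span {x}"
  shows "\<exists>P. invertible P \<and> P *v v3 1 0 0 = x \<and> P *v v3 0 1 0 = y"
proof -
  have "vec.dim (vec.span {x, y}) \<le> card {x, y}"
    by (rule vec.dim_le_card) (auto intro: vec.span_base)
  also have "\<dots> \<le> 2" by (simp add: card_insert_if)
  finally have d2: "vec.dim (vec.span {x, y}) \<le> 2" .
  have "vec.span {x, y} \<noteq> UNIV"
  proof
    assume "vec.span {x, y} = UNIV"
    then have "vec.dim (vec.span {x, y}) = 3" using dim3[where 'a='a] by simp
    then show False using d2 by simp
  qed
  then obtain z where z: "z \<notin> vec.span {x, y}" by blast
  define P :: "'a^3^3" where "P = (\<chi> i j. if j = 1 then x$i else if j = 2 then y$i else z$i)"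
  have ker: "v = 0" if "P *v v = 0" for v
  proof -
    have e: "v$1 *s x + v$2 *s y + v$3 *s z = 0" using that unfolding P_def P_mulv .
    have v3: "v$3 = 0"
    proof (rule ccontr)
      assume n: "v$3 \<noteq> 0"
      have "z = (- v$1 / v$3) *s x + (- v$2 / v$3) *s y"
      proof -
        have "v$3 *s z = - (v$1 *s x) - v$2 *s y" using e by (simp add: algebra_simps eq_neg_iff_add_eq_0)
        then have "(1 / v$3) *s (v$3 *s z) = (1 / v$3) *s (- (v$1 *s x) - v$2 *s y)" by simp
        then show ?thesis using n by (simp add: vec.scale_right_diff_distrib algebra_simps)
      qed
      moreover have "(- v$1 / v$3) *s x + (- v$2 / v$3) *s y \<in> vec.span {x, y}"
        by (intro vec.span_add vec.span_scale) (auto intro: vec.span_base)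
      ultimately show False using z by simp
    qed
    have v2: "v$2 = 0"
    proof (rule ccontr)
      assume n: "v$2 \<noteq> 0"
      have "v$2 *s y = - (v$1 *s x)" using e v3 by (simp add: algebra_simps eq_neg_iff_add_eq_0)
      then have "(1 / v$2) *s (v$2 *s y) = (1 / v$2) *s (- (v$1 *s x))" by simp
      then have "y = (- v$1 / v$2) *s x" using n by (simp add: algebra_simps)
      moreover have "(- v$1 / v$2) *s x \<in> vec.span {x}" by (intro vec.span_scale vec.span_base) simp
      ultimately show False using y by simp
    qed
    have "v$1 *s x = 0" using e v2 v3 by simp
    then have "v$1 = 0" using x by simp
    then show ?thesis using v2 v3 by (simp add: vec3_0)
  qed
  have "invertible P" using ker matrix_left_invertible_ker invertible_left_inverse by blast
  moreover have "P *v v3 1 0 0 = x" "P *v v3 0 1 0 = y" unfolding P_def P_mulv by simp_all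
  ultimately show ?thesis by blast
qed

lemma class_scale: "(c::'a::field) \<noteq> 0 \<Longrightarrow> pgl_class (\<chi> i j. c * (A::'a^3^3)$i$j) = pgl_class A"
proof -
  assume c: "c \<noteq> 0"
  show ?thesis unfolding pgl_class_def
  proof (rule set_eqI, rule iffI)
    fix B assume "B \<in> {(\<chi> i j. d * (\<chi> i j. c * A$i$j)$i$j) |d. d \<noteq> 0}"
    then obtain d where "d \<noteq> 0" "B = (\<chi> i j. (d * c) * A$i$j)" by (auto simp: mult.assoc)
    then show "B \<in> {(\<chi> i j. d * A$i$j) |d. d \<noteq> 0}" using c by auto
  next
    fix B assume "B \<in> {(\<chi> i j. d * A$i$j) |d. d \<noteq> 0}"
    then obtain d where d: "d \<noteq> 0" "B = (\<chi> i j. d * A$i$j)" by auto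
    then have "B = (\<chi> i j. (d / c) * (\<chi> i j. c * A$i$j)$i$j)" using c by (simp add: vec_eq_iff)
    moreover have "d / c \<noteq> 0" using c d by simp
    ultimately show "B \<in> {(\<chi> i j. d * (\<chi> i j. c * A$i$j)$i$j) |d. d \<noteq> 0}" by blast
  qed
qed

lemma class_eq: "pgl_class A = pgl_class B \<Longrightarrow> \<exists>c. c \<noteq> 0 \<and> B = (\<chi> i j. c * (A::'a::field^3^3)$i$j)"
proof -
  assume e: "pgl_class A = pgl_class B"
  have "B \<in> pgl_class B" unfolding pgl_class_def by (intro CollectI exI[of _ 1]) (simp add: vec_eq_iff)
  then show ?thesis using e unfolding pgl_class_def by auto
qed

lemma card_S_M:
  fixes x y :: "'a::{finite,field}^3"
  assumes x: "x \<noteq> 0" and y: "y \<noteq> 0"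
  shows "card {g\<in>PGL3. pgl_act g (vec.span {x}) = vec.span {y} \<and> fixed_point_free g}
       = card {A. A *v x = y \<and> noeig A}"
proof -
  let ?S = "{g\<in>PGL3. pgl_act g (vec.span {x}) = vec.span {y} \<and> fixed_point_free g}"
  let ?M = "{A. A *v x = y \<and> noeig A}"
  have inj: "inj_on pgl_class ?M"
  proof (rule inj_onI)
    fix A B assume A: "A \<in> ?M" and B: "B \<in> ?M" and e: "pgl_class A = pgl_class B"
    obtain c where c: "c \<noteq> 0" "B = (\<chi> i j. c * A$i$j)" using class_eq[OF e] by blast
    have "y = c *s y" using A B c(2) by (simp add: cmat_mulv)
    then have "(c - 1) *s y = 0" by (simp add: vec.scale_left_diff_distrib)
    then have "c - 1 = 0" using y by (metis vec.scale_eq_0_iff)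
    then have "c = 1" by simp
    then show "A = B" using c(2) by (simp add: vec_eq_iff)
  qed
  have img: "pgl_class ` ?M = ?S"
  proof (rule set_eqI, rule iffI)
    fix g assume "g \<in> pgl_class ` ?M"
    then obtain A where A: "A *v x = y" "noeig A" "g = pgl_class A" by blast
    have iA: "invertible A" using noeig_inv A(2) .
    then have "g \<in> PGL3" unfolding PGL3_def A(3) by blast
    moreover have "pgl_act g (vec.span {x}) = vec.span {y}" using A by (simp add: act_class)
    moreover have "fixed_point_free g" using fpf_iff[OF iA] A by simp
    ultimately show "g \<in> ?S" by blast
  next
    fix g assume "g \<in> ?S"
    then have g: "g \<in> PGL3" "pgl_act g (vec.span {x}) = vec.span {y}" "fixed_point_free g" by auto
    obtain A0 where A0: "invertible A0" "g = pgl_class A0" using g(1) unfolding PGL3_def by blast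
    have "vec.span {y} = vec.span {A0 *v x}" using g(2) A0(2) by (simp add: act_class)
    then obtain k where k: "A0 *v x = k *s y" using span_eq_mult by blast
    have "A0 *v x \<noteq> 0" using inv_ker[OF A0(1)] x by blast
    then have k0: "k \<noteq> 0" using k by auto
    define A where "A = (\<chi> i j. (1/k) * A0$i$j)"
    have cA: "pgl_class A = g" unfolding A_def using class_scale[of "1/k" A0] k0 A0(2) by simp
    have Ax: "A *v x = y" unfolding A_def cmat_mulv k using k0 by simp
    have "\<forall>z. A *v z = 0 \<longrightarrow> z = 0"
    proof (intro allI impI)
      fix z assume "A *v z = 0"
      then have "(1/k) *s (A0 *v z) = 0" unfolding A_def cmat_mulv .
      then have "A0 *v z = 0" using k0 by simp
      then show "z = 0" using inv_ker[OF A0(1)] by blast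
    qed
    then have iA: "invertible A" using matrix_left_invertible_ker invertible_left_inverse by blast
    have "noeig A" using fpf_iff[OF iA] cA g(3) by simp
    then show "g \<in> pgl_class ` ?M" using Ax cA by blast
  qed
  show ?thesis using card_image[OF inj] img by simp
qed

lemma noeig_conj: "noeig B \<Longrightarrow> P ** Q = mat 1 \<Longrightarrow> Q ** P = mat 1 \<Longrightarrow> noeig (P ** B ** Q)"
proof -
  assume n: "noeig B" and P: "P ** Q = mat 1" "Q ** P = mat 1"
  show ?thesis unfolding noeig_def
  proof (intro allI impI notI)
    fix z \<mu> assume z: "z \<noteq> 0" and e: "(P ** B ** Q) *v z = \<mu> *s z"
    have "B *v (Q *v z) = Q *v ((P ** B ** Q) *v z)"
      by (simp add: matrix_vector_mul_assoc matrix_mul_assoc P(2) flip: matrix_mul_assoc[of Q P])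
    also have "\<dots> = \<mu> *s (Q *v z)" using e by (simp add: mulv_scale)
    finally have "B *v (Q *v z) = \<mu> *s (Q *v z)" .
    moreover have "Q *v z \<noteq> 0"
    proof
      assume "Q *v z = 0"
      then have "P *v (Q *v z) = 0" by simp
      then show False using z P(1) by (simp add: matrix_vector_mul_assoc)
    qed
    ultimately show False using n unfolding noeig_def by blast
  qed
qed

lemma card_M_Mp:
  fixes x y :: "'a::{finite,field}^3"
  assumes x: "x \<noteq> 0" and y: "y \<notin> vec.span {x}"
  shows "card {A. A *v x = y \<and> noeig A} = card {B::'a^3^3. B *v v3 1 0 0 = v3 0 1 0 \<and> noeig B}"
proof -
  obtain P where P: "invertible P" "P *v v3 1 0 0 = x" "P *v v3 0 1 0 = y" using basis_P[OF x y] by blast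
  obtain Q where Q: "P ** Q = mat 1" "Q ** P = mat 1" using P(1) unfolding invertible_def by blast
  have Qx: "Q *v x = v3 1 0 0" using P(2) Q(2) by (metis matrix_vector_mul_assoc matrix_vector_mul_lid)
  have Qy: "Q *v y = v3 0 1 0" using P(3) Q(2) by (metis matrix_vector_mul_assoc matrix_vector_mul_lid)
  let ?M = "{A. A *v x = y \<and> noeig A}"
  let ?M' = "{B::'a^3^3. B *v v3 1 0 0 = v3 0 1 0 \<and> noeig B}"
  define F where "F B = P ** B ** Q" for B :: "'a^3^3"
  have inj: "inj_on F ?M'"
  proof (rule inj_onI)
    fix B B' assume "F B = F B'"
    then have "Q ** (P ** B ** Q) ** P = Q ** (P ** B' ** Q) ** P" unfolding F_def by simp
    moreover have "Q ** (P ** C ** Q) ** P = C" for C :: "'a^3^3"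
    proof -
      have "Q ** (P ** C ** Q) ** P = (Q ** P) ** C ** (Q ** P)" by (simp add: matrix_mul_assoc)
      then show ?thesis by (simp add: Q(2) matrix_mul_lid matrix_mul_rid)
    qed
    ultimately show "B = B'" by simp
  qed
  have img: "F ` ?M' = ?M"
  proof (rule set_eqI, rule iffI)
    fix A assume "A \<in> F ` ?M'"
    then obtain B where B: "B *v v3 1 0 0 = v3 0 1 0" "noeig B" "A = F B" by blast
    have "A *v x = P *v (B *v (Q *v x))" unfolding B(3) F_def by (simp add: matrix_vector_mul_assoc matrix_mul_assoc)
    also have "\<dots> = y" using Qx B(1) P(3) by simp
    finally show "A \<in> ?M" using noeig_conj[OF B(2) Q] B(3) unfolding F_def by simp
  next
    fix A assume A: "A \<in> ?M"
    define B where "B = Q ** A ** P"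
    have "B *v v3 1 0 0 = Q *v (A *v (P *v v3 1 0 0))" unfolding B_def by (simp add: matrix_vector_mul_assoc matrix_mul_assoc)
    also have "\<dots> = v3 0 1 0" using A P(2) Qy by simp
    finally have "B \<in> ?M'" using noeig_conj[of A Q P] A Q unfolding B_def by simp
    moreover have "F B = A"
    proof -
      have "F B = (P ** Q) ** A ** (P ** Q)" unfolding F_def B_def by (simp add: matrix_mul_assoc)
      then show ?thesis by (simp add: Q(1) matrix_mul_lid matrix_mul_rid)
    qed
    ultimately show "A \<in> F ` ?M'" by blast
  qed
  show ?thesis using card_image[OF inj] img by simp
qed

lemma card_S:
  fixes x y :: "'a::{finite,field}^3"
  assumes x: "x \<noteq> 0" and y: "y \<noteq> 0" and ne: "vec.span {x} \<noteq> vec.span {y}"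
  shows "3 * card {g\<in>PGL3. pgl_act g (vec.span {x}) = vec.span {y} \<and> fixed_point_free g}
       = CARD('a) * CARD('a) * (CARD('a) - 1) * (CARD('a)^3 - CARD('a))"
proof -
  have yx: "y \<notin> vec.span {x}"
  proof
    assume "y \<in> vec.span {x}"
    then obtain k where k: "y = k *s x" unfolding span_sing by blast
    then have "k \<noteq> 0" using y by auto
    then show False using ne k span_scale by metis
  qed
  show ?thesis
    unfolding card_S_M[OF x y] card_M_Mp[OF x yx] card_Mp
    using count_noroot[where 'a='a] by (simp add: algebra_simps)
qed

lemma span_sub: "vec.subspace W \<Longrightarrow> z \<in> W \<Longrightarrow> vec.span {z} \<subseteq> W"
  by (simp add: vec.span_minimal)

lemma line_count:
  fixes A :: "'a::{finite,field}^3^3" and W :: "('a^3) set"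
  assumes W: "vec.subspace W" "vec.dim W = 2" and iA: "invertible A" and n: "noeig A"
  shows "card {c\<in>{p\<in>pg_points. p \<subseteq> W}. pgl_act (pgl_class A) c \<in> {p\<in>pg_points. p \<subseteq> W}} = 1"
proof -
  obtain Q where Q: "Q ** A = mat 1" "A ** Q = mat 1" using iA unfolding invertible_def by blast
  obtain z0 where z0: "z0 \<noteq> 0" "{z\<in>W. A *v z \<in> W} = vec.span {z0}"
    using line_meet[OF W Q] n unfolding noeig_def by blast
  have z0W: "z0 \<in> W" "A *v z0 \<in> W" using z0(2) vec.span_base[of z0 "{z0}"] by auto
  have "{c\<in>{p\<in>pg_points. p \<subseteq> W}. pgl_act (pgl_class A) c \<in> {p\<in>pg_points. p \<subseteq> W}} = {vec.span {z0}}"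
  proof (rule set_eqI, rule iffI)
    fix c assume "c \<in> {c\<in>{p\<in>pg_points. p \<subseteq> W}. pgl_act (pgl_class A) c \<in> {p\<in>pg_points. p \<subseteq> W}}"
    then have c: "c \<in> pg_points" "c \<subseteq> W" "pgl_act (pgl_class A) c \<subseteq> W" by auto
    obtain z where z: "z \<noteq> 0" "c = vec.span {z}" using c(1) pt_iff by blast
    have "z \<in> W" using c(2) z(2) vec.span_base[of z "{z}"] by auto
    moreover have "A *v z \<in> W" using c(3) z(2) vec.span_base[of "A *v z" "{A *v z}"] by (auto simp: act_class)
    ultimately have "z \<in> vec.span {z0}" using z0(2) by blast
    then obtain k where k: "z = k *s z0" unfolding span_sing by blast
    then have "k \<noteq> 0" using z(1) by auto
    then have "c = vec.span {z0}" using z(2) k span_scale by metis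
    then show "c \<in> {vec.span {z0}}" by simp
  next
    fix c assume "c \<in> {vec.span {z0}}"
    then have c: "c = vec.span {z0}" by simp
    have "A *v z0 \<noteq> 0" using inv_ker[OF iA] z0(1) by blast
    then have "pgl_act (pgl_class A) c \<in> {p\<in>pg_points. p \<subseteq> W}"
      unfolding c act_class using pt_iff span_sub[OF W(1) z0W(2)] by blast
    moreover have "c \<in> {p\<in>pg_points. p \<subseteq> W}" using c pt_iff z0(1) span_sub[OF W(1) z0W(1)] by blast
    ultimately show "c \<in> {c\<in>{p\<in>pg_points. p \<subseteq> W}. pgl_act (pgl_class A) c \<in> {p\<in>pg_points. p \<subseteq> W}}" by blast
  qed
  then show ?thesis by simp
qed

lemma finite_pts: "finite (pg_points :: ('a::{finite,field}^3) set set)"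
  by (rule finite_subset[OF subset_UNIV]) simp

lemma finite_PGL: "finite (PGL3 :: ('a::{finite,field}^3^3) set set)"
  by (rule finite_subset[OF subset_UNIV]) simp

theorem mainTheorem10:
  fixes l :: "('a::{finite,field} ^ 3) set set"
  assumes "l \<in> pg_lines"
  shows "\<forall>ab \<in> pg_points \<times> pg_points.
           Nop (e_line l) ab =
             (let q = (of_nat CARD('a) :: complex); v = (q - 1) * q * (q^2 - 1) / 3
              in q^2 * v * e_all ab)"
proof
  fix ab :: "('a^3) set \<times> ('a^3) set" assume ab: "ab \<in> pg_points \<times> pg_points"
  obtain a b where abe: "ab = (a, b)" by (cases ab)
  have a: "a \<in> pg_points" and b: "b \<in> pg_points" using ab abe by auto
  obtain W where W: "vec.subspace W" "vec.dim W = 2" and l: "l = {p\<in>pg_points. p \<subseteq> W}"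
    using assms unfolding pg_lines_def by blast
  define S where "S = {g\<in>PGL3. pgl_act g a = b \<and> fixed_point_free g}"
  have fl: "finite l" using finite_pts l by simp
  have fS: "finite S" using finite_PGL S_def by simp
  have lP: "l \<subseteq> pg_points" using l by blast
  have one: "card {c\<in>l. pgl_act g c \<in> l} = 1" if gS: "g \<in> S" for g
  proof -
    obtain A where A: "invertible A" "g = pgl_class A" using gS unfolding S_def PGL3_def by blast
    have "noeig A" using fpf_iff[OF A(1)] gS A(2) unfolding S_def by simp
    then show ?thesis using line_count[OF W A(1)] A(2) l by simp
  qed
  have "Nop (e_line l) ab = (\<Sum>cd\<in>pg_points \<times> pg_points. if cd \<in> l \<times> l then of_nat (Nmat ab cd) else 0)"
    unfolding Nop_def e_line_def by (rule sum.cong[OF refl]) (auto simp: mem_Times_iff)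
  also have "\<dots> = (\<Sum>cd\<in>l \<times> l. of_nat (Nmat ab cd))"
    using lP by (simp add: sum.inter_restrict[symmetric] Int_absorb1 Sigma_mono finite_pts)
  also have "\<dots> = of_nat (\<Sum>cd\<in>l \<times> l. Nmat ab cd)" by simp
  also have "(\<Sum>cd\<in>l \<times> l. Nmat ab cd) = card S"
  proof -
    have "(\<Sum>cd\<in>l \<times> l. Nmat ab cd) = (\<Sum>(c,d)\<in>l \<times> l. card {g\<in>S. pgl_act g c = d})"
      unfolding Nmat_def abe S_def
      by (rule sum.cong[OF refl]) (auto intro!: arg_cong[where f=card])
    also have "\<dots> = (\<Sum>c\<in>l. \<Sum>d\<in>l. card {g\<in>S. pgl_act g c = d})"
      by (rule sum.cartesian_product[symmetric])
    also have "\<dots> = (\<Sum>c\<in>l. \<Sum>g\<in>S. card {d\<in>l. pgl_act g c = d})"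
      by (rule sum.cong[OF refl]) (rule swap_count[OF fl fS])
    also have "\<dots> = (\<Sum>c\<in>l. \<Sum>g\<in>S. if pgl_act g c \<in> l then 1 else 0)"
    proof (intro sum.cong refl)
      fix c g
      show "card {d\<in>l. pgl_act g c = d} = (if pgl_act g c \<in> l then 1 else 0)"
      proof (cases "pgl_act g c \<in> l")
        case True
        then have "{d\<in>l. pgl_act g c = d} = {pgl_act g c}" by auto
        then show ?thesis using True by simp
      qed simp
    qed
    also have "\<dots> = (\<Sum>g\<in>S. \<Sum>c\<in>l. if pgl_act g c \<in> l then 1 else 0)" by (rule sum.swap)
    also have "\<dots> = (\<Sum>g\<in>S. card {c\<in>l. pgl_act g c \<in> l})"
      by (intro sum.cong refl) (simp add: card_filter_sum[OF fl])
    also have "\<dots> = (\<Sum>g\<in>S. 1)" by (intro sum.cong refl) (simp add: one)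
    finally show ?thesis by simp
  qed
  finally have N: "Nop (e_line l) ab = of_nat (card S)" .
  show "Nop (e_line l) ab = (let q = (of_nat CARD('a) :: complex); v = (q - 1) * q * (q^2 - 1) / 3
              in q^2 * v * e_all ab)"
  proof (cases "a = b")
    case True
    have "S = {}"
    proof -
      have "\<not> fixed_point_free g" if "pgl_act g a = a" for g
        using that a unfolding fixed_point_free_def by blast
      then show ?thesis unfolding S_def using True by blast
    qed
    then show ?thesis using N True abe by (simp add: e_all_def Let_def)
  next
    case False
    obtain x where x: "x \<noteq> 0" "a = vec.span {x}" using a pt_iff by blast
    obtain y where y: "y \<noteq> 0" "b = vec.span {y}" using b pt_iff by blast
    have c3: "3 * card S = CARD('a) * CARD('a) * (CARD('a) - 1) * (CARD('a)^3 - CARD('a))"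
      unfolding S_def x(2) y(2) by (rule card_S[OF x(1) y(1)]) (use False x y in simp)
    have q1: "CARD('a) \<ge> 1" by (simp add: Suc_leI)
    have q3: "CARD('a) \<le> CARD('a)^3" using q1 by (simp add: power3_eq_cube)
    define q :: complex where "q = of_nat CARD('a)"
    have "3 * (of_nat (card S) :: complex) = of_nat (3 * card S)" by simp
    also have "\<dots> = q * q * (q - 1) * (q^3 - q)"
      unfolding c3 q_def using q1 q3 by (simp add: of_nat_diff)
    finally have "of_nat (card S) = q * q * (q - 1) * (q^3 - q) / 3" by (simp add: field_simps)
    moreover have "e_all ab = 1" using False a b abe by (simp add: e_all_def)
    ultimately show ?thesis using N unfolding q_def[symmetric] Let_def
      by (simp add: algebra_simps power2_eq_square power3_eq_cube)
  qed
qed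

end
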